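(* Assume $abcd\neq0$. Let $(\omega_M)_{M\ge1}$ be points of $B_{in}$, let $\theta_M\in(0,\pi)$ be defined by $\cos\theta_M=x(\omega_M)$, and put $\theta'_M=\min\{\theta_M,\pi-\theta_M\}$. If $M\theta'_M\to\theta_*$ as $M\to\infty$ with $\theta_*\in(0,\infty)\setminus\pi\mathbb{Z}$, then \[\lim_{M\to\infty}\frac{\mathcal{E}_M(\omega_M)}{M}=\frac{1}{\sin^2\theta_*}\left(1-\frac{\sin2\theta_*}{2\theta_*}\right).\]
   Context: Setting: $C=\begin{bmatrix} a&b\\ c&d\end{bmatrix}$ a fixed $2\times2$ unitary matrix, $\Delta=\det C$, a fixed square root $\Delta^{1/2}$; for each $M\ge1$, $\Gamma_M=\{0,\dots,M-1\}$ and $E_M$ is the linear map on $\ell^2(\Gamma_M;\mathbb{C}^2)$ with $(E_M\varphi)(x)=P\varphi(x+1)+Q\varphi(x-1)$, $\varphi(-1)=\varphi(M)=0$, $P=\begin{bmatrix} a&b\\0&0\end{bmatrix}$, $Q=\begin{bmatrix}0&0\\c&d\end{bmatrix}$. For $\omega$ on the unit circle let $z=\Delta^{1/2}\omega$ and let $\varphi$ be the unique solution of $(z-E_M)\varphi=\delta_0|R\rangle$, $|R\rangle=(0,1)^\top$; the energy is $\mathcal{E}_M(\omega)=\sum_{n=0}^{M-1}\|\varphi(n)\|^2_{\mathbb{C}^2}$. Let $x(\omega)=\frac{\omega+\omega^{-1}}{2|a|}$ and $B_{in}=\{\omega:|\omega|=1,\ |x(\omega)|<1\}$. *)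

theory Defs
  imports "HOL-Analysis.Analysis"
begin

definition unitary2 :: "complex \<Rightarrow> complex \<Rightarrow> complex \<Rightarrow> complex \<Rightarrow> bool" where
  "unitary2 a b c d \<longleftrightarrow>
     cnj a * a + cnj c * c = 1 \<and> cnj a * b + cnj c * d = 0 \<and>
     cnj b * a + cnj d * c = 0 \<and> cnj b * b + cnj d * d = 1"

text \<open>Vectors in C^2 are pairs. Functions on Gamma_M = {0..M-1} are represented as
  functions on int vanishing outside Gamma_M (this encodes phi(-1) = phi(M) = 0).\<close>
definition supported_on :: "nat \<Rightarrow> (int \<Rightarrow> complex \<times> complex) \<Rightarrow> bool" where
  "supported_on M \<phi> \<longleftrightarrow> (\<forall>n. (n < 0 \<or> n \<ge> int M) \<longrightarrow> \<phi> n = (0, 0))"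

text \<open>(E_M phi)(x) = P phi(x+1) + Q phi(x-1), P = [[a,b],[0,0]], Q = [[0,0],[c,d]].\<close>
definition E_op :: "complex \<Rightarrow> complex \<Rightarrow> complex \<Rightarrow> complex \<Rightarrow>
    (int \<Rightarrow> complex \<times> complex) \<Rightarrow> int \<Rightarrow> complex \<times> complex" where
  "E_op a b c d \<phi> x =
     (a * fst (\<phi> (x + 1)) + b * snd (\<phi> (x + 1)),
      c * fst (\<phi> (x - 1)) + d * snd (\<phi> (x - 1)))"

text \<open>phi solves (z - E_M) phi = delta_0 |R>, |R> = (0,1).\<close>
definition solves :: "complex \<Rightarrow> complex \<Rightarrow> complex \<Rightarrow> complex \<Rightarrow> nat \<Rightarrow> complex \<Rightarrow>
    (int \<Rightarrow> complex \<times> complex) \<Rightarrow> bool" where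
  "solves a b c d M z \<phi> \<longleftrightarrow> supported_on M \<phi> \<and>
     (\<forall>x. 0 \<le> x \<and> x < int M \<longrightarrow>
        (z * fst (\<phi> x) - fst (E_op a b c d \<phi> x),
         z * snd (\<phi> x) - snd (E_op a b c d \<phi> x)) = (if x = 0 then (0, 1) else (0, 0)))"

text \<open>Energy E_M(omega), with z = s * omega where s is the fixed square root of det C.\<close>
definition energy :: "complex \<Rightarrow> complex \<Rightarrow> complex \<Rightarrow> complex \<Rightarrow> complex \<Rightarrow> nat \<Rightarrow> complex \<Rightarrow> real" where
  "energy a b c d s M \<omega> =
     (let \<phi> = (THE \<phi>. solves a b c d M (s * \<omega>) \<phi>) in
      \<Sum>n<M. (cmod (fst (\<phi> (int n))))\<^sup>2 + (cmod (snd (\<phi> (int n))))\<^sup>2)"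

definition xfun :: "complex \<Rightarrow> complex \<Rightarrow> complex" where
  "xfun a \<omega> = (\<omega> + inverse \<omega>) / (2 * complex_of_real (cmod a))"

definition B_in :: "complex \<Rightarrow> complex set" where
  "B_in a = {\<omega>. cmod \<omega> = 1 \<and> cmod (xfun a \<omega>) < 1}"

end

theory Submission
  imports Defs
begin


lemma I1:
  fixes a b s \<omega> \<sigma> \<gamma> sn cs R :: complex
  assumes ca: "cnj a * a = R*R" and sg: "\<sigma>^2 + \<gamma>^2 = 1" and w: "\<omega> + 1/\<omega> = 2*R*\<gamma>"
    and nz: "a \<noteq> 0" "\<omega> \<noteq> 0" "R \<noteq> 0"
  shows "(s * \<omega>)*(b*R/(a*\<omega>))* sn = (s * cnj a/R)*(a*(b*R/(a*\<omega>))*(sn*\<gamma> - cs*\<sigma>) + b*(\<sigma>*(cs*\<gamma> + sn*\<sigma>) + (\<gamma> - R/\<omega>)*(sn*\<gamma> - cs*\<sigma>)))"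
proof -
  have e: "\<sigma>*\<sigma> = 1 - \<gamma>*\<gamma>" using sg by (simp add: power2_eq_square algebra_simps)
  have "(s * cnj a/R)*(a*(b*R/(a*\<omega>))*(sn*\<gamma> - cs*\<sigma>) + b*(\<sigma>*(cs*\<gamma> + sn*\<sigma>) + (\<gamma> - R/\<omega>)*(sn*\<gamma> - cs*\<sigma>)))
       = (s * cnj a/R)*b* sn*(\<sigma>*\<sigma> + \<gamma>*\<gamma>)" using nz by (simp add: field_simps)
  also have "\<dots> = (s * cnj a/R)*b* sn" using e by simp
  also have "\<dots> = (s * \<omega>)*(b*R/(a*\<omega>))* sn" using nz ca by (simp add: field_simps)
  finally show ?thesis ..
qed

lemma I2:
  fixes a b c d s \<omega> \<sigma> \<gamma> sn cs R D :: complex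
  assumes ca: "cnj a * a = R*R" and cb: "cnj b * b = 1 - R*R" and sg: "\<sigma>^2 + \<gamma>^2 = 1" and w: "\<omega> + 1/\<omega> = 2*R*\<gamma>"
    and nz: "a \<noteq> 0" "\<omega> \<noteq> 0" "R \<noteq> 0" and s2: "s * s = D" and dd: "d = D * cnj a" and cc: "c = - D * cnj b"
  shows "(s * \<omega>)*(s * cnj a/R)*(\<sigma>*(cs*\<gamma> + sn*\<sigma>) + (\<gamma> - R/\<omega>)*(sn*\<gamma> - cs*\<sigma>))
     = c*(b*R/(a*\<omega>))* sn + d*(\<sigma>* cs + (\<gamma> - R/\<omega>)* sn)"
proof -
  have e: "\<sigma>*\<sigma> = 1 - \<gamma>*\<gamma>" using sg by (simp add: power2_eq_square algebra_simps)
  have ab: "cnj a = R*R/a" using ca nz by (simp add: field_simps)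
  have L: "(s * \<omega>)*(s * cnj a/R)*(\<sigma>*(cs*\<gamma> + sn*\<sigma>) + (\<gamma> - R/\<omega>)*(sn*\<gamma> - cs*\<sigma>))
      = D*cnj a/R * (\<omega>*\<sigma>*cs*(\<gamma> - \<gamma>) + sn*(\<omega>*(\<sigma>*\<sigma> + \<gamma>*\<gamma>) - R*\<gamma>) + R*cs*\<sigma>)"
    using nz s2[symmetric] by (simp add: field_simps)
  also have "\<dots> = D*cnj a/R * (sn*(\<omega> - R*\<gamma>) + R*cs*\<sigma>)" using e by simp
  finally have L2: "(s * \<omega>)*(s * cnj a/R)*(\<sigma>*(cs*\<gamma> + sn*\<sigma>) + (\<gamma> - R/\<omega>)*(sn*\<gamma> - cs*\<sigma>)) = D*cnj a/R * (sn*(\<omega> - R*\<gamma>) + R*cs*\<sigma>)" .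
  have "c*(b*R/(a*\<omega>))* sn + d*(\<sigma>* cs + (\<gamma> - R/\<omega>)* sn)
     = D * (- (cnj b * b)*R/(a*\<omega>)* sn + cnj a*(\<sigma>* cs + (\<gamma> - R/\<omega>)* sn))"
    by (simp add: cc dd algebra_simps)
  also have "\<dots> = D * (- (1 - R*R)*R/(a*\<omega>)* sn + R*R/a*(\<sigma>* cs + (\<gamma> - R/\<omega>)* sn))"
    by (simp add: cb ab)
  also have "\<dots> = D*R/a * (sn*(R*\<gamma> - 1/\<omega>) + R*cs*\<sigma>)" using nz by (simp add: field_simps)
  also have "\<dots> = D*R/a * (sn*(\<omega> - R*\<gamma>) + R*cs*\<sigma>)"
  proof -
    have "R*\<gamma> - 1/\<omega> = \<omega> - R*\<gamma>" using w by (simp add: algebra_simps)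
    thus ?thesis by simp
  qed
  also have "\<dots> = D*cnj a/R * (sn*(\<omega> - R*\<gamma>) + R*cs*\<sigma>)"
  proof -
    have "cnj a / R = R / a" using ab nz by (simp add: field_simps)
    thus ?thesis by (metis times_divide_eq_right mult.assoc)
  qed
  finally show ?thesis using L2 by simp
qed

definition Fu :: "complex \<Rightarrow> complex \<Rightarrow> real \<Rightarrow> nat \<Rightarrow> nat \<Rightarrow> complex" where
  "Fu \<mu> P \<theta> M n = \<mu>^n * P * of_real (sin ((real M - 1 - real n) * \<theta>))"
definition Fv :: "complex \<Rightarrow> complex \<Rightarrow> real \<Rightarrow> nat \<Rightarrow> nat \<Rightarrow> complex" where
  "Fv \<mu> Q \<theta> M n = \<mu>^n * (of_real (sin \<theta> * cos ((real M - 1 - real n) * \<theta>)) + Q * of_real (sin ((real M - 1 - real n) * \<theta>)))"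

lemma shiftK: "(real M - 1 - real (Suc n)) * \<theta> = (real M - 1 - real n) * \<theta> - \<theta>"
  by (simp add: algebra_simps)

lemma F_I1:
  fixes a b s \<omega> R :: complex and \<theta> :: real
  assumes ca: "cnj a * a = R*R" and w: "\<omega> + 1/\<omega> = 2*R*cos \<theta>"
    and nz: "a \<noteq> 0" "\<omega> \<noteq> 0" "R \<noteq> 0"
  shows "(s * \<omega>) * Fu (s * cnj a/R) (b*R/(a*\<omega>)) \<theta> M n
     = a * Fu (s * cnj a/R) (b*R/(a*\<omega>)) \<theta> M (Suc n) + b * Fv (s * cnj a/R) (cos \<theta> - R/\<omega>) \<theta> M (Suc n)"
proof -
  define K where "K = (real M - 1 - real n) * \<theta>"
  define \<mu> where "\<mu> = s * cnj a/R"
  have sg: "(complex_of_real (sin \<theta>))^2 + (complex_of_real (cos \<theta>))^2 = 1"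
    by (metis of_real_add of_real_power of_real_1 sin_cos_squared_add)
  note h = I1[OF ca sg w nz, of s b "complex_of_real (sin K)" "complex_of_real (cos K)"]
  have "(s * \<omega>) * Fu \<mu> (b*R/(a*\<omega>)) \<theta> M n = \<mu>^n * ((s * \<omega>)*(b*R/(a*\<omega>))* sin K)"
    unfolding Fu_def K_def by (simp add: algebra_simps)
  also have "\<dots> = \<mu>^n * (\<mu>*(a*(b*R/(a*\<omega>))*(sin K*cos \<theta> - cos K* sin \<theta>) + b*(sin \<theta>*(cos K*cos \<theta> + sin K* sin \<theta>) + (cos \<theta> - R/\<omega>)*(sin K*cos \<theta> - cos K* sin \<theta>))))"
    using h unfolding \<mu>_def by simp
  also have "\<dots> = a * Fu \<mu> (b*R/(a*\<omega>)) \<theta> M (Suc n) + b * Fv \<mu> (cos \<theta> - R/\<omega>) \<theta> M (Suc n)"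
    unfolding Fu_def Fv_def shiftK K_def[symmetric] sin_diff cos_diff
    by (simp add: algebra_simps)
  finally show ?thesis unfolding \<mu>_def .
qed

lemma F_I2:
  fixes a b c d s \<omega> R D :: complex and \<theta> :: real
  assumes ca: "cnj a * a = R*R" and cb: "cnj b * b = 1 - R*R" and w: "\<omega> + 1/\<omega> = 2*R*cos \<theta>"
    and nz: "a \<noteq> 0" "\<omega> \<noteq> 0" "R \<noteq> 0" and s2: "s * s = D" and dd: "d = D * cnj a" and cc: "c = - D * cnj b"
  shows "(s * \<omega>) * Fv (s * cnj a/R) (cos \<theta> - R/\<omega>) \<theta> M (Suc n)
     = c * Fu (s * cnj a/R) (b*R/(a*\<omega>)) \<theta> M n + d * Fv (s * cnj a/R) (cos \<theta> - R/\<omega>) \<theta> M n"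
proof -
  define K where "K = (real M - 1 - real n) * \<theta>"
  define \<mu> where "\<mu> = s * cnj a/R"
  have sg: "(complex_of_real (sin \<theta>))^2 + (complex_of_real (cos \<theta>))^2 = 1"
    by (metis of_real_add of_real_power of_real_1 sin_cos_squared_add)
  note h = I2[OF ca cb sg w nz s2 dd cc, of "complex_of_real (cos K)" "complex_of_real (sin K)"]
  have "(s * \<omega>) * Fv \<mu> (cos \<theta> - R/\<omega>) \<theta> M (Suc n) = \<mu>^n * ((s * \<omega>)*\<mu>*(sin \<theta>*(cos K*cos \<theta> + sin K* sin \<theta>) + (cos \<theta> - R/\<omega>)*(sin K*cos \<theta> - cos K* sin \<theta>)))"
    unfolding Fv_def shiftK K_def[symmetric] sin_diff cos_diff
    by (simp add: algebra_simps)
  also have "\<dots> = \<mu>^n * (c*(b*R/(a*\<omega>))* sin K + d*(sin \<theta>* cos K + (cos \<theta> - R/\<omega>)* sin K))"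
    using h unfolding \<mu>_def by simp
  also have "\<dots> = c * Fu \<mu> (b*R/(a*\<omega>)) \<theta> M n + d * Fv \<mu> (cos \<theta> - R/\<omega>) \<theta> M n"
    unfolding Fu_def Fv_def K_def
    by (simp add: algebra_simps)
  finally show ?thesis unfolding \<mu>_def .
qed

lemma solvesD:
  assumes "solves a b c d M z \<psi>" "0 \<le> x" "x < int M"
  shows "z * fst (\<psi> x) = a * fst (\<psi> (x+1)) + b * snd (\<psi> (x+1))"
    and "z * snd (\<psi> x) = c * fst (\<psi> (x - 1)) + d * snd (\<psi> (x - 1)) + (if x = 0 then 1 else 0)"
proof -
  have "(z * fst (\<psi> x) - fst (E_op a b c d \<psi> x), z * snd (\<psi> x) - snd (E_op a b c d \<psi> x)) = (if x = 0 then (0, 1) else (0, 0))"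
    using assms unfolding solves_def by blast
  hence e1: "z * fst (\<psi> x) - fst (E_op a b c d \<psi> x) = 0" and e2: "z * snd (\<psi> x) - snd (E_op a b c d \<psi> x) = (if x = 0 then 1 else 0)"
    by (auto split: if_splits)
  from e1 show "z * fst (\<psi> x) = a * fst (\<psi> (x+1)) + b * snd (\<psi> (x+1))" unfolding E_op_def by simp
  from e2 show "z * snd (\<psi> x) = c * fst (\<psi> (x - 1)) + d * snd (\<psi> (x - 1)) + (if x = 0 then 1 else 0)"
    unfolding E_op_def by (simp add: algebra_simps)
qed

lemma solvesI:
  assumes "supported_on M \<psi>"
    and "\<And>x. 0 \<le> x \<Longrightarrow> x < int M \<Longrightarrow> z * fst (\<psi> x) = a * fst (\<psi> (x+1)) + b * snd (\<psi> (x+1))"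
    and "\<And>x. 0 \<le> x \<Longrightarrow> x < int M \<Longrightarrow> z * snd (\<psi> x) = c * fst (\<psi> (x - 1)) + d * snd (\<psi> (x - 1)) + (if x = 0 then 1 else 0)"
  shows "solves a b c d M z \<psi>"
  unfolding solves_def E_op_def using assms by (auto simp: algebra_simps)

lemma unique_sol:
  fixes a b c d z :: complex and fu fv :: "nat \<Rightarrow> complex"
  assumes M: "M \<ge> 1" and nz: "z \<noteq> 0" "d \<noteq> 0"
    and I1: "\<And>n. z * fu n = a * fu (Suc n) + b * fv (Suc n)"
    and I2: "\<And>n. z * fv (Suc n) = c * fu n + d * fv n"
    and fum: "fu (M-1) = 0" and fvm: "fv (M-1) \<noteq> 0" and fv0: "fv 0 \<noteq> 0"
  defines "\<phi>0 \<equiv> (\<lambda>x. if 0 \<le> x \<and> x < int M then (fu (nat x)/(z*fv 0), fv (nat x)/(z*fv 0)) else (0,0))"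
  shows "solves a b c d M z \<phi>0" and "\<And>\<psi>. solves a b c d M z \<psi> \<Longrightarrow> \<psi> = \<phi>0"
proof -
  show "solves a b c d M z \<phi>0"
  proof (rule solvesI)
    show "supported_on M \<phi>0" unfolding supported_on_def \<phi>0_def by auto
  next
    fix x :: int assume x: "0 \<le> x" "x < int M"
    show "z * fst (\<phi>0 x) = a * fst (\<phi>0 (x+1)) + b * snd (\<phi>0 (x+1))"
    proof (cases "x + 1 < int M")
      case True
      have "nat (x+1) = Suc (nat x)" using x by auto
      then show ?thesis using x True I1[of "nat x"] nz fv0 unfolding \<phi>0_def
        by (simp add: field_simps)
    next
      case False
      hence "nat x = M - 1" using x by auto
      then show ?thesis using x False fum unfolding \<phi>0_def by simp
    qed
  next
    fix x :: int assume x: "0 \<le> x" "x < int M"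
    show "z * snd (\<phi>0 x) = c * fst (\<phi>0 (x - 1)) + d * snd (\<phi>0 (x - 1)) + (if x = 0 then 1 else 0)"
    proof (cases "x = 0")
      case True
      then show ?thesis using x nz fv0 unfolding \<phi>0_def by simp
    next
      case False
      have "nat x = Suc (nat (x - 1))" using x False by auto
      then show ?thesis using x False I2[of "nat (x-1)"] nz fv0 unfolding \<phi>0_def
        by (simp add: field_simps)
    qed
  qed
next
  fix \<psi> assume sol: "solves a b c d M z \<psi>"
  have sup: "supported_on M \<psi>" using sol unfolding solves_def by blast
  define m where "m = M - 1"
  define k where "k = snd (\<psi> (int m)) / fv m"
  have mM: "int m + 1 = int M" using M unfolding m_def by auto
  have bk: "j \<le> m \<Longrightarrow> \<psi> (int (m - j)) = (k * fu (m - j), k * fv (m - j))" for j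
  proof (induction j)
    case 0
    have "\<psi> (int m + 1) = (0,0)" using sup mM unfolding supported_on_def by auto
    hence "z * fst (\<psi> (int m)) = 0" using solvesD(1)[OF sol, of "int m"] mM by simp
    hence "fst (\<psi> (int m)) = 0" using nz by simp
    then show ?case using fum fvm unfolding k_def m_def by (simp add: prod_eq_iff)
  next
    case (Suc j)
    define x where "x = m - Suc j"
    have xm: "m - j = Suc x" using Suc.prems unfolding x_def by auto
    have IH: "\<psi> (int (Suc x)) = (k * fu (Suc x), k * fv (Suc x))" using Suc xm by simp
    have x1: "int x + 1 = int (Suc x)" by simp
    have e1: "z * fst (\<psi> (int x)) = a * fst (\<psi> (int (Suc x))) + b * snd (\<psi> (int (Suc x)))"
      using solvesD(1)[OF sol, of "int x"] x1 mM xm Suc.prems unfolding x_def by auto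
    have f: "fst (\<psi> (int x)) = k * fu x"
    proof -
      have "z * fst (\<psi> (int x)) = z * (k * fu x)" using e1 IH I1[of x] by (simp add: algebra_simps)
      thus ?thesis using nz by simp
    qed
    have e2: "z * snd (\<psi> (int (Suc x))) = c * fst (\<psi> (int x)) + d * snd (\<psi> (int x))"
      using solvesD(2)[OF sol, of "int (Suc x)"] mM xm Suc.prems by auto
    have g: "snd (\<psi> (int x)) = k * fv x"
    proof -
      have "d * snd (\<psi> (int x)) = d * (k * fv x)" using e2 IH f I2[of x] by (simp add: algebra_simps) metis
      thus ?thesis using nz by simp
    qed
    show ?case using f g unfolding x_def by (simp add: prod_eq_iff)
  qed
  have in_range: "\<psi> (int n) = (k * fu n, k * fv n)" if "n < M" for n
    using bk[of "m - n"] that unfolding m_def by auto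
  have "z * snd (\<psi> 0) = 1"
    using solvesD(2)[OF sol, of 0] M sup unfolding supported_on_def by auto
  hence kk: "k = 1 / (z * fv 0)" using in_range[of 0] M nz fv0 by (simp add: field_simps)
  show "\<psi> = \<phi>0"
  proof
    fix x :: int
    show "\<psi> x = \<phi>0 x"
    proof (cases "0 \<le> x \<and> x < int M")
      case True
      then obtain n where "x = int n" "n < M" by (metis nat_0_le nat_less_iff)
      then show ?thesis using in_range[of n] kk unfolding \<phi>0_def by simp
    next
      case False
      then show ?thesis using sup unfolding supported_on_def \<phi>0_def by auto
    qed
  qed
qed

lemma energy_eq:
  fixes a b c d s \<omega> :: complex and fu fv :: "nat \<Rightarrow> complex"
  assumes M: "M \<ge> 1" and nz: "s * \<omega> \<noteq> 0" "d \<noteq> 0"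
    and I1: "\<And>n. (s * \<omega>) * fu n = a * fu (Suc n) + b * fv (Suc n)"
    and I2: "\<And>n. (s * \<omega>) * fv (Suc n) = c * fu n + d * fv n"
    and fum: "fu (M-1) = 0" and fvm: "fv (M-1) \<noteq> 0" and fv0: "fv 0 \<noteq> 0"
  shows "energy a b c d s M \<omega> = (\<Sum>n<M. (cmod (fu n))^2 + (cmod (fv n))^2) / (cmod (s * \<omega> * fv 0))^2"
proof -
  define \<phi>0 where "\<phi>0 = (\<lambda>x. if 0 \<le> x \<and> x < int M then (fu (nat x)/((s * \<omega>)*fv 0), fv (nat x)/((s * \<omega>)*fv 0)) else (0,0))"
  note U = unique_sol[OF M nz I1 I2 fum fvm fv0]
  have "(THE \<phi>. solves a b c d M (s * \<omega>) \<phi>) = \<phi>0"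
    apply (rule the_equality)
    using U unfolding \<phi>0_def by blast+
  hence "energy a b c d s M \<omega> = (\<Sum>n<M. (cmod (fst (\<phi>0 (int n))))\<^sup>2 + (cmod (snd (\<phi>0 (int n))))\<^sup>2)"
    unfolding energy_def Let_def by simp
  also have "\<dots> = (\<Sum>n<M. ((cmod (fu n))^2 + (cmod (fv n))^2) / (cmod (s * \<omega> * fv 0))^2)"
    by (rule sum.cong) (auto simp: \<phi>0_def norm_divide power_divide add_divide_distrib)
  also have "\<dots> = (\<Sum>n<M. (cmod (fu n))^2 + (cmod (fv n))^2) / (cmod (s * \<omega> * fv 0))^2"
    by (simp add: sum_divide_distrib)
  finally show ?thesis .
qed

definition H :: "real \<Rightarrow> real \<Rightarrow> real \<Rightarrow> real" where
  "H r \<theta> t = (sin \<theta> * cos t + (1 - r^2) * cos \<theta> * sin t)^2 + r^2 * (1 - r^2 * (cos \<theta>)^2) * (sin t)^2"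

lemma H_pos:
  assumes "0 < r" "r < 1" "0 < \<theta>" "\<theta> < pi"
  shows "H r \<theta> t > 0"
proof (cases "sin t = 0")
  case True
  hence "(cos t)^2 = 1" using sin_cos_squared_add[of t] by simp
  moreover have "sin \<theta> > 0" using assms by (simp add: sin_gt_zero)
  ultimately show ?thesis using True unfolding H_def by (simp add: power_mult_distrib)
next
  case False
  have c1: "(cos \<theta>)^2 \<le> 1" using sin_cos_squared_add[of \<theta>] by (smt (verit) zero_le_power2)
  have "r^2 * (cos \<theta>)^2 \<le> r^2" using c1 by (simp add: mult_left_le)
  moreover have "r^2 < 1" using assms by (simp add: power_less_one_iff)
  ultimately have "1 - r^2 * (cos \<theta>)^2 > 0" by linarith
  moreover have "(sin t)^2 > 0" using False by simp
  moreover have "r^2 > 0" using assms by simp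
  ultimately have "r^2 * (1 - r^2 * (cos \<theta>)^2) * (sin t)^2 > 0" by simp
  thus ?thesis unfolding H_def by (smt (verit) zero_le_power2)
qed

lemma cmodQ:
  fixes \<omega> :: complex and r \<theta> x y :: real
  assumes "cmod \<omega> = 1" "Re \<omega> = r * cos \<theta>"
  shows "(cmod (of_real x + (cos \<theta> - of_real r/\<omega>) * of_real y))^2
      = (x + (1 - r^2) * cos \<theta> * y)^2 + r^2 * (1 - r^2 * (cos \<theta>)^2) * y^2"
proof -
  have inv: "1/\<omega> = cnj \<omega>" using assms(1) complex_div_cnj[of 1 \<omega>] by simp
  have im: "(Im \<omega>)^2 = 1 - r^2 * (cos \<theta>)^2" using assms cmod_power2[of \<omega>] by (simp add: power_mult_distrib)
  have "(cmod (of_real x + (cos \<theta> - of_real r/\<omega>) * of_real y))^2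
       = (x + (cos \<theta> - r * Re \<omega>) * y)^2 + (r * Im \<omega> * y)^2"
  proof -
    have "of_real r / \<omega> = of_real r * cnj \<omega>" using inv by (metis times_divide_eq_right mult.right_neutral)
    thus ?thesis unfolding cmod_power2 by simp
  qed
  also have "\<dots> = (x + (1 - r^2) * cos \<theta> * y)^2 + r^2 * (Im \<omega>)^2 * y^2"
    using assms(2) by (simp add: algebra_simps power2_eq_square)
  finally show ?thesis using im by simp
qed

lemma unitary_facts:
  assumes u: "unitary2 a b c d" and nz: "a * b * c * d \<noteq> 0"
  shows "d = (a*d - b*c) * cnj a" "c = - (a*d - b*c) * cnj b" "cnj a * a + cnj b * b = 1"
    "cnj (a*d - b*c) * (a*d - b*c) = 1"
proof -
  define D where "D = a*d - b*c"
  have u1: "cnj a * a + cnj c * c = 1" and u2: "cnj a * b + cnj c * d = 0"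
    and u3: "cnj b * a + cnj d * c = 0" and u4: "cnj b * b + cnj d * d = 1"
    using u unfolding unitary2_def by auto
  have ab: "cnj a * b = - cnj c * d" using u2 by (simp add: eq_neg_iff_add_eq_0)
  have ba: "cnj b * a = - cnj d * c" using u3 by (simp add: eq_neg_iff_add_eq_0)
  have dd: "d = D * cnj a"
  proof -
    have "D * cnj a = d * (cnj a * a) - c * (cnj a * b)" unfolding D_def by (simp add: algebra_simps)
    also have "\<dots> = d * (cnj a * a + cnj c * c)" using ab by (simp add: algebra_simps)
    finally show ?thesis using u1 by simp
  qed
  have cc: "c = - D * cnj b"
  proof -
    have "D * cnj b = d * (cnj b * a) - c * (cnj b * b)" unfolding D_def by (simp add: algebra_simps)
    also have "\<dots> = - c * (cnj b * b + cnj d * d)" using ba by (simp add: algebra_simps)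
    also have "\<dots> = - c" using u4 by simp
    finally have "D * cnj b = - c" .
    thus ?thesis by (metis minus_minus mult_minus_left)
  qed
  have Dnz: "D \<noteq> 0" using dd nz by auto
  have ab1: "cnj a * a + cnj b * b = 1"
  proof -
    have "D = a * d - b * c" by (simp add: D_def)
    also have "a * d - b * c = a * (D * cnj a) - b * (- D * cnj b)" using dd cc by simp
    finally have "D = a * (D * cnj a) - b * (- D * cnj b)" .
    hence "D * 1 = D * (cnj a * a + cnj b * b)" by (simp add: algebra_simps)
    thus ?thesis using Dnz by (metis mult_left_cancel)
  qed
  have "cnj d * d = cnj D * D * (cnj a * a)" using dd by (simp add: algebra_simps)
  moreover have "cnj c * c = cnj D * D * (cnj b * b)" using cc by (simp add: algebra_simps)
  ultimately have "(cnj a * a + cnj b * b) * (1 + cnj D * D) = (cnj a * a + cnj c * c) + (cnj b * b + cnj d * d)"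
    by (simp add: algebra_simps)
  hence "(cnj a * a + cnj b * b) * (1 + cnj D * D) = 2" using u1 u4 by simp
  hence "cnj D * D = 1" using ab1 by simp
  thus "cnj (a*d - b*c) * (a*d - b*c) = 1" unfolding D_def .
  show "d = (a*d - b*c) * cnj a" using dd unfolding D_def .
  show "c = - (a*d - b*c) * cnj b" using cc unfolding D_def .
  show "cnj a * a + cnj b * b = 1" by (fact ab1)
qed

lemma energy_formula:
  fixes a b c d s \<omega> :: complex and \<theta> :: real
  assumes u: "unitary2 a b c d" and s2: "s^2 = a * d - b * c" and nz: "a * b * c * d \<noteq> 0"
    and w1: "cmod \<omega> = 1" and th: "0 < \<theta>" "\<theta> < pi"
    and cx: "complex_of_real (cos \<theta>) = xfun a \<omega>" and M: "M \<ge> 1"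
  shows "energy a b c d s M \<omega> =
     (\<Sum>k<M. (1 - (cmod a)^2) * (sin (real k * \<theta>))^2 + H (cmod a) \<theta> (real k * \<theta>))
       / H (cmod a) \<theta> ((real M - 1) * \<theta>)"
proof -
  define D where "D = a * d - b * c"
  define r where "r = cmod a"
  define R where "R = complex_of_real r"
  have dd: "d = D * cnj a" and cc: "c = - D * cnj b" and ab1: "cnj a * a + cnj b * b = 1"
    and DD: "cnj D * D = 1" using unitary_facts[OF u nz] unfolding D_def by auto
  have anz: "a \<noteq> 0" and bnz: "b \<noteq> 0" and cnz: "c \<noteq> 0" and dnz: "d \<noteq> 0" using nz by auto
  have ca: "cnj a * a = R * R" unfolding R_def r_def
    using complex_norm_square[of a] by (simp add: power2_eq_square mult.commute)
  have cb: "cnj b * b = 1 - R * R" using ab1 ca by (simp add: algebra_simps)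
  have r0: "r > 0" using anz unfolding r_def by simp
  have Rnz: "R \<noteq> 0" using r0 unfolding R_def by simp
  have rb: "(cmod b)^2 = 1 - r^2"
  proof -
    have "complex_of_real ((cmod b)^2) = complex_of_real (1 - r^2)"
      using cb complex_norm_square[of b] unfolding R_def by (simp add: power2_eq_square mult.commute)
    thus ?thesis using of_real_eq_iff by blast
  qed
  have r1: "r < 1"
  proof -
    have "(cmod b)^2 > 0" using bnz by simp
    hence "r^2 < 1" using rb by simp
    thus ?thesis using r0 by (simp add: power_less_one_iff)
  qed
  have wnz: "\<omega> \<noteq> 0" using w1 by auto
  have w: "\<omega> + 1/\<omega> = 2 * R * cos \<theta>"
    using cx Rnz unfolding xfun_def R_def r_def by (simp add: field_simps)
  have cD: "cmod D = 1"
  proof -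
    have "complex_of_real ((cmod D)^2) = 1" using DD complex_norm_square[of D] by (simp add: mult.commute)
    hence "(cmod D)^2 = 1" by (metis of_real_eq_1_iff)
    thus ?thesis by (smt (verit) norm_ge_zero power2_eq_1_iff)
  qed
  have cs1: "cmod s = 1"
  proof -
    have "(cmod s)^2 = 1" using s2 cD unfolding D_def by (metis norm_power)
    thus ?thesis by (smt (verit) norm_ge_zero power2_eq_1_iff)
  qed
  have ss: "s * s = D" using s2 unfolding D_def by (simp add: power2_eq_square)
  have Rew: "Re \<omega> = r * cos \<theta>"
  proof -
    have inv: "1/\<omega> = cnj \<omega>" using w1 complex_div_cnj[of 1 \<omega>] by simp
    have "complex_of_real (2 * Re \<omega>) = complex_of_real (2 * r * cos \<theta>)"
      using w unfolding inv complex_add_cnj R_def by simp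
    thus ?thesis using of_real_eq_iff by (metis mult.assoc mult_cancel_left zero_neq_numeral)
  qed
  define \<mu> where "\<mu> = s * cnj a / R"
  define P where "P = b * R / (a * \<omega>)"
  define Q where "Q = cos \<theta> - R / \<omega>"
  define fu where "fu = Fu \<mu> P \<theta> M"
  define fv where "fv = Fv \<mu> Q \<theta> M"
  have cmu: "cmod \<mu> = 1" unfolding \<mu>_def R_def r_def using cs1 r0 unfolding r_def
    by (simp add: norm_mult norm_divide)
  have cP: "(cmod P)^2 = 1 - r^2" unfolding P_def R_def using w1 r0 rb unfolding r_def
    by (simp add: norm_mult norm_divide)
  have HQ: "(cmod (Fv \<mu> Q \<theta> M n))^2 = H r \<theta> ((real M - 1 - real n) * \<theta>)" for n
  proof -
    have "(cmod (Fv \<mu> Q \<theta> M n))^2 = (cmod (of_real (sin \<theta> * cos ((real M - 1 - real n) * \<theta>)) + (cos \<theta> - of_real r/\<omega>) * of_real (sin ((real M - 1 - real n) * \<theta>))))^2"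
      unfolding Fv_def Q_def R_def using cmu by (simp add: norm_mult norm_power)
    also have "\<dots> = H r \<theta> ((real M - 1 - real n) * \<theta>)"
      unfolding cmodQ[OF w1 Rew] H_def by (simp add: algebra_simps)
    finally show ?thesis .
  qed
  have Hp: "\<And>t. H r \<theta> t > 0" using H_pos[OF r0 r1 th] by blast
  have I1: "(s * \<omega>) * fu n = a * fu (Suc n) + b * fv (Suc n)" for n
    unfolding fu_def fv_def \<mu>_def P_def Q_def using F_I1[OF ca w anz wnz Rnz] by blast
  have I2: "(s * \<omega>) * fv (Suc n) = c * fu n + d * fv n" for n
    unfolding fu_def fv_def \<mu>_def P_def Q_def using F_I2[OF ca cb w anz wnz Rnz ss dd cc] by blast
  have fum: "fu (M-1) = 0" unfolding fu_def Fu_def using M by (simp add: of_nat_diff)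
  have fvm: "fv (M-1) \<noteq> 0" unfolding fv_def Fv_def using M cmu sin_gt_zero[OF th]
    by (auto simp: of_nat_diff)
  have fv0: "fv 0 \<noteq> 0"
  proof
    assume "fv 0 = 0"
    hence "(cmod (fv 0))^2 = 0" by simp
    thus False using HQ[of 0] Hp unfolding fv_def by (metis less_irrefl)
  qed
  have szn: "s * \<omega> \<noteq> 0" using cs1 wnz by auto
  have E: "energy a b c d s M \<omega> = (\<Sum>n<M. (cmod (fu n))^2 + (cmod (fv n))^2) / (cmod (s * \<omega> * fv 0))^2"
    by (rule energy_eq[OF M szn dnz I1 I2 fum fvm fv0])
  have den: "(cmod (s * \<omega> * fv 0))^2 = H r \<theta> ((real M - 1) * \<theta>)"
    using HQ[of 0] cs1 w1 unfolding fv_def by (simp add: norm_mult)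
  define G where "G = (\<lambda>k::nat. (1 - r^2) * (sin (real k * \<theta>))^2 + H r \<theta> (real k * \<theta>))"
  have num: "(\<Sum>n<M. (cmod (fu n))^2 + (cmod (fv n))^2) = (\<Sum>n<M. G (M - Suc n))"
  proof (rule sum.cong)
    fix n assume "n \<in> {..<M}"
    hence k: "real M - 1 - real n = real (M - Suc n)" by (simp add: of_nat_diff)
    have "(cmod (fu n))^2 = (1 - r^2) * (sin (real (M - Suc n) * \<theta>))^2"
      unfolding fu_def Fu_def k using cmu cP by (simp add: norm_mult norm_power power_mult_distrib)
    moreover have "(cmod (fv n))^2 = H r \<theta> (real (M - Suc n) * \<theta>)"
      using HQ[of n] k unfolding fv_def by simp
    ultimately show "(cmod (fu n))^2 + (cmod (fv n))^2 = G (M - Suc n)" unfolding G_def by simp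
  qed simp
  also have "\<dots> = (\<Sum>k<M. G k)" by (rule sum.nat_diff_reindex)
  finally show ?thesis using E den unfolding G_def r_def by simp
qed



lemma sum_cos2: "2 * sin t * (\<Sum>k<M. cos (2 * real k * t)) = sin ((2 * real M - 1) * t) + sin t"
proof (induction M)
  case 0
  then show ?case by simp
next
  case (Suc M)
  have e1: "(2 * real (Suc M) - 1) * t = 2 * real M * t + t" by (simp add: algebra_simps)
  have e2: "(2 * real M - 1) * t = 2 * real M * t - t" by (simp add: algebra_simps)
  have "2 * sin t * (\<Sum>k<Suc M. cos (2 * real k * t)) = 2 * sin t * (\<Sum>k<M. cos (2 * real k * t)) + 2 * sin t * cos (2 * real M * t)"
    by (simp add: algebra_simps)
  also have "\<dots> = sin (2 * real M * t - t) + sin t + 2 * sin t * cos (2 * real M * t)" using Suc e2 by simp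
  also have "\<dots> = sin (2 * real M * t + t) + sin t" by (simp add: sin_add sin_diff)
  finally show ?case using e1 by simp
qed

lemma sum_sin2: "(\<Sum>k<M. (sin (real k * t))^2) = real M / 2 - (\<Sum>k<M. cos (2 * real k * t)) / 2"
proof -
  have "(\<Sum>k<M. (sin (real k * t))^2) = (\<Sum>k<M. 1/2 - cos (2 * real k * t) / 2)"
  proof (rule sum.cong)
    fix k assume "k \<in> {..<M}"
    have "cos (2 * (real k * t)) = 1 - 2 * (sin (real k * t))^2" by (rule cos_double_sin)
    thus "(sin (real k * t))^2 = 1/2 - cos (2 * real k * t) / 2" by (simp add: mult.assoc field_simps)
  qed simp
  also have "\<dots> = real M / 2 - (\<Sum>k<M. cos (2 * real k * t)) / 2"
    by (simp add: sum_subtractf sum_divide_distrib)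
  finally show ?thesis .
qed

lemma sin_sym_sq: "(sin (real k * (pi - x)))^2 = (sin (real k * x))^2"
proof -
  have "real k * (pi - x) = real k * pi - real k * x" by (simp add: algebra_simps)
  hence "sin (real k * (pi - x)) = - ((-1)^k * sin (real k * x))" by (simp add: sin_diff)
  thus ?thesis by (simp add: power_mult_distrib flip: power_mult)
qed
lemma sinc_lim: "((\<lambda>x::real. sin x / x) \<longlongrightarrow> 1) (at 0)"
proof -
  have "(sin has_field_derivative cos 0) (at (0::real))" by (rule DERIV_sin)
  hence "((\<lambda>h::real. (sin (0 + h) - sin 0) / h) \<longlongrightarrow> cos 0) (at 0)"
    by (rule DERIV_D)
  thus ?thesis by simp
qed

lemma H_expand: "H r \<theta> x = (r^2 + (1 - 2*r^2) * (cos \<theta>)^2) * (sin x)^2 + ((sin \<theta>)^2 * (cos x)^2 + 2 * sin \<theta> * (1 - r^2) * cos \<theta> * cos x * sin x)"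
  unfolding H_def by (simp add: power2_eq_square algebra_simps)

lemma bound_term: 
  fixes r \<sigma> \<theta> x :: real
  assumes "0 \<le> r" "r \<le> 1" "0 \<le> \<sigma>"
  shows "\<bar>\<sigma>^2 * (cos x)^2 + 2 * \<sigma> * (1 - r^2) * cos \<theta> * cos x * sin x\<bar> \<le> \<sigma>^2 + 2 * \<sigma>"
proof -
  have c1: "(cos x)^2 \<le> 1" using sin_cos_squared_add[of x] zero_le_power2[of "sin x"] by linarith
  have "\<sigma>^2 * (cos x)^2 \<le> \<sigma>^2" by (rule mult_left_le[OF c1]) simp
  hence "\<bar>\<sigma>^2 * (cos x)^2\<bar> \<le> \<sigma>^2" by simp
  moreover have "\<bar>(1 - r^2) * cos \<theta> * cos x * sin x\<bar> \<le> 1"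
  proof -
    have "\<bar>1 - r^2\<bar> \<le> 1" using assms by (simp add: abs_le_iff power_le_one)
    thus ?thesis unfolding abs_mult using abs_cos_le_one[of \<theta>] abs_cos_le_one[of x] abs_sin_le_one[of x]
      by (meson abs_ge_zero mult_le_one)
  qed
  hence "\<bar>2 * \<sigma> * ((1 - r^2) * cos \<theta> * cos x * sin x)\<bar> \<le> 2 * \<sigma>" using assms(3)
    by (simp add: abs_mult mult_left_le)
  moreover have "2 * \<sigma> * (1 - r^2) * cos \<theta> * cos x * sin x = 2 * \<sigma> * ((1 - r^2) * cos \<theta> * cos x * sin x)"
    by (simp add: mult.assoc)
  ultimately show ?thesis using abs_triangle_ineq[of "\<sigma>^2 * (cos x)^2" "2 * \<sigma> * (1 - r^2) * cos \<theta> * cos x * sin x"]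
    by linarith
qed



lemma tc: "(f \<longlongrightarrow> l) F \<Longrightarrow> eventually (\<lambda>x. f x = g x) F \<Longrightarrow> (g \<longlongrightarrow> l) F"
  using tendsto_cong by metis

lemma tc2: "(f \<longlongrightarrow> l) F \<Longrightarrow> eventually (\<lambda>x. f x = g x) F \<Longrightarrow> l = l' \<Longrightarrow> (g \<longlongrightarrow> l') F"
  using tendsto_cong by metis

lemma limit_part:
  fixes r \<theta>s :: real and \<theta> :: "nat \<Rightarrow> real"
  assumes r: "0 < r" "r < 1" and th: "\<forall>M\<ge>1. 0 < \<theta> M \<and> \<theta> M < pi"
    and lim: "(\<lambda>M. real M * min (\<theta> M) (pi - \<theta> M)) \<longlonglongrightarrow> \<theta>s" and ts: "\<theta>s > 0" and sn: "sin \<theta>s \<noteq> 0"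
  shows "(\<lambda>M. ((\<Sum>k<M. (1 - r^2) * (sin (real k * \<theta> M))^2 + H r (\<theta> M) (real k * \<theta> M))
            / H r (\<theta> M) ((real M - 1) * \<theta> M)) / real M)
         \<longlonglongrightarrow> (1 / (sin \<theta>s)^2) * (1 - sin (2 * \<theta>s) / (2 * \<theta>s))"
proof -
  define t where "t M = min (\<theta> M) (pi - \<theta> M)" for M
  define \<sigma> where "\<sigma> M = sin (\<theta> M)" for M
  define A where "A M = 1 + (1 - 2*r^2) * (cos (\<theta> M))^2" for M
  define A2 where "A2 M = r^2 + (1 - 2*r^2) * (cos (\<theta> M))^2" for M
  define X where "X M x = (\<sigma> M)^2 * (cos x)^2 + 2 * \<sigma> M * (1 - r^2) * cos (\<theta> M) * cos x * sin x" for M x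
  define Ss where "Ss M = (\<Sum>k<M. (sin (real k * \<theta> M))^2)" for M
  define E1 where "E1 M = (\<Sum>k<M. X M (real k * \<theta> M)) / real M" for M
  define S2 where "S2 M = (sin ((real M - 1) * \<theta> M))^2" for M
  define E2 where "E2 M = X M ((real M - 1) * \<theta> M)" for M
  have rq: "r^2 < 1" using r power_less_one_iff[of r 2] by simp
  have ev1: "eventually (\<lambda>M. M \<ge> (1::nat)) sequentially" by (rule eventually_ge_at_top)
  have tpos: "t M > 0" and tlt: "t M < pi" if "M \<ge> 1" for M
    using th that unfolding t_def by auto
  have sint: "sin (\<theta> M) = sin (t M)" if "M \<ge> 1" for M
    unfolding t_def by (cases "\<theta> M \<le> pi - \<theta> M") (auto simp: min_def sin_pi_minus)
  have sqt: "(sin (real k * \<theta> M))^2 = (sin (real k * t M))^2" for k M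
  proof (cases "\<theta> M \<le> pi - \<theta> M")
    case True thus ?thesis unfolding t_def by (simp add: min_def)
  next
    case False
    hence "\<theta> M = pi - t M" unfolding t_def by (simp add: min_def)
    thus ?thesis using sin_sym_sq[of k "t M"] by simp
  qed
  have sigpos: "\<sigma> M \<ge> 0" if "M \<ge> 1" for M
    using th that unfolding \<sigma>_def by (simp add: sin_ge_zero less_imp_le)
  have t0: "t \<longlonglongrightarrow> 0"
  proof -
    have "(\<lambda>M. real M * t M * inverse (real M)) \<longlonglongrightarrow> \<theta>s * 0"
      by (rule tendsto_mult[OF lim[folded t_def] lim_inverse_n])
    moreover have "eventually (\<lambda>M. real M * t M * inverse (real M) = t M) sequentially"
      using ev1 by eventually_elim simp
    ultimately have "t \<longlonglongrightarrow> \<theta>s * 0" by (rule tc)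
    thus ?thesis by simp
  qed
  have s0: "\<sigma> \<longlonglongrightarrow> 0"
  proof -
    have "(\<lambda>M. sin (t M)) \<longlonglongrightarrow> sin 0" by (rule tendsto_sin[OF t0])
    moreover have "eventually (\<lambda>M. sin (t M) = \<sigma> M) sequentially"
      using ev1 by eventually_elim (simp add: sint \<sigma>_def)
    ultimately show ?thesis by (rule tc2) simp
  qed
  have cos2: "(\<lambda>M. (cos (\<theta> M))^2) \<longlonglongrightarrow> 1"
  proof -
    have "(\<lambda>M. 1 - (\<sigma> M)^2) \<longlonglongrightarrow> 1 - 0^2" by (intro tendsto_intros s0)
    moreover have "(cos (\<theta> M))^2 = 1 - (\<sigma> M)^2" for M unfolding \<sigma>_def using sin_cos_squared_add[of "\<theta> M"] by linarith
    ultimately show ?thesis by simp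
  qed
  have evt: "eventually (\<lambda>M. t M \<in> UNIV \<and> t M \<noteq> 0) sequentially"
    using ev1
  proof eventually_elim
    case (elim M) show ?case using tpos[OF elim] by simp
  qed
  have tat: "filterlim t (at 0) sequentially"
    unfolding filterlim_at using t0 evt by simp
  have sinc: "(\<lambda>M. sin (t M) / t M) \<longlonglongrightarrow> 1"
    by (rule filterlim_compose[OF sinc_lim tat])
  have Msin: "(\<lambda>M. real M * \<sigma> M) \<longlonglongrightarrow> \<theta>s"
  proof -
    have "(\<lambda>M. real M * t M * (sin (t M) / t M)) \<longlonglongrightarrow> \<theta>s * 1"
      by (rule tendsto_mult[OF lim[folded t_def] sinc])
    moreover have "eventually (\<lambda>M. real M * t M * (sin (t M) / t M) = real M * \<sigma> M) sequentially"
      using ev1 by eventually_elim (simp add: sint \<sigma>_def tpos less_imp_neq[symmetric])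
    ultimately show ?thesis by (rule tc2) simp
  qed
  have SsL: "(\<lambda>M. Ss M / real M) \<longlonglongrightarrow> 1/2 - (sin (2 * \<theta>s - 0) + 0) / (4 * \<theta>s)"
  proof -
    have "(\<lambda>M. 1/2 - (sin (2 * (real M * t M) - t M) + \<sigma> M) / (4 * (real M * \<sigma> M)))
          \<longlonglongrightarrow> 1/2 - (sin (2 * \<theta>s - 0) + 0) / (4 * \<theta>s)"
      using ts by (intro tendsto_intros lim[folded t_def] t0 s0 Msin) simp
    moreover have "eventually (\<lambda>M. 1/2 - (sin (2 * (real M * t M) - t M) + \<sigma> M) / (4 * (real M * \<sigma> M)) = Ss M / real M) sequentially"
      using ev1
    proof eventually_elim
      case (elim M)
      have sp: "sin (t M) > 0" using tpos[OF elim] tlt[OF elim] by (simp add: sin_gt_zero)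
      have "Ss M = (\<Sum>k<M. (sin (real k * t M))^2)" unfolding Ss_def using sqt by simp
      also have "\<dots> = real M / 2 - (\<Sum>k<M. cos (2 * real k * t M)) / 2" by (rule sum_sin2)
      also have "(\<Sum>k<M. cos (2 * real k * t M)) = (sin ((2 * real M - 1) * t M) + sin (t M)) / (2 * sin (t M))"
        using sum_cos2[of "t M" M] sp by (simp add: field_simps)
      finally have "Ss M = real M / 2 - (sin ((2 * real M - 1) * t M) + sin (t M)) / (4 * sin (t M))" by simp
      moreover have "(2 * real M - 1) * t M = 2 * (real M * t M) - t M" by (simp add: algebra_simps)
      ultimately have "Ss M = real M / 2 - (sin (2 * (real M * t M) - t M) + sin (t M)) / (4 * sin (t M))" by metis
      moreover have "real M > 0" using elim by simp
      ultimately have "Ss M / real M = 1/2 - (sin (2 * (real M * t M) - t M) + sin (t M)) / (4 * sin (t M)) / real M"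
        by (simp add: diff_divide_distrib)
      also have "\<dots> = 1/2 - (sin (2 * (real M * t M) - t M) + sin (t M)) / (4 * sin (t M) * real M)"
        by (simp only: divide_divide_eq_left)
      also have "4 * sin (t M) * real M = 4 * (real M * \<sigma> M)"
        using sint[OF elim] unfolding \<sigma>_def by simp
      finally show ?case using sint[OF elim] unfolding \<sigma>_def by simp
    qed
    ultimately show ?thesis by (rule tc2) simp
  qed
  have bnd: "\<bar>X M x\<bar> \<le> (\<sigma> M)^2 + 2 * \<sigma> M" if "M \<ge> 1" for M x
    unfolding X_def using bound_term[of r "\<sigma> M" x "\<theta> M"] r sigpos[OF that] by simp
  have bnd0: "(\<lambda>M. (\<sigma> M)^2 + 2 * \<sigma> M) \<longlonglongrightarrow> 0"
  proof -
    have "(\<lambda>M. (\<sigma> M)^2 + 2 * \<sigma> M) \<longlonglongrightarrow> 0^2 + 2 * 0" by (intro tendsto_intros s0)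
    thus ?thesis by simp
  qed
  have E1L: "E1 \<longlonglongrightarrow> 0"
  proof (rule Lim_null_comparison[OF _ bnd0])
    show "eventually (\<lambda>M. norm (E1 M) \<le> (\<sigma> M)^2 + 2 * \<sigma> M) sequentially"
      using ev1
    proof eventually_elim
      case (elim M)
      have "\<bar>\<Sum>k<M. X M (real k * \<theta> M)\<bar> \<le> (\<Sum>k<M. \<bar>X M (real k * \<theta> M)\<bar>)" by (rule sum_abs)
      also have "\<dots> \<le> real (card {..<M}) * ((\<sigma> M)^2 + 2 * \<sigma> M)"
        by (rule sum_bounded_above) (use bnd elim in auto)
      finally have "\<bar>\<Sum>k<M. X M (real k * \<theta> M)\<bar> \<le> real M * ((\<sigma> M)^2 + 2 * \<sigma> M)" by simp
      have Mp: "real M > 0" using elim by simp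
      have "norm (E1 M) = \<bar>\<Sum>k<M. X M (real k * \<theta> M)\<bar> / real M" unfolding E1_def by simp
      also have "\<dots> \<le> real M * ((\<sigma> M)^2 + 2 * \<sigma> M) / real M"
        by (rule divide_right_mono) (use \<open>\<bar>\<Sum>k<M. X M (real k * \<theta> M)\<bar> \<le> real M * ((\<sigma> M)^2 + 2 * \<sigma> M)\<close> in auto)
      also have "\<dots> = (\<sigma> M)^2 + 2 * \<sigma> M" using Mp by simp
      finally show ?case .
    qed
  qed
  have E2L: "E2 \<longlonglongrightarrow> 0"
  proof (rule Lim_null_comparison[OF _ bnd0])
    show "eventually (\<lambda>M. norm (E2 M) \<le> (\<sigma> M)^2 + 2 * \<sigma> M) sequentially"
      using ev1
    proof eventually_elim
      case (elim M) show ?case unfolding E2_def using bnd[OF elim] by simp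
    qed
  qed
  have S2L: "S2 \<longlonglongrightarrow> (sin \<theta>s)^2"
  proof -
    have "(\<lambda>M. (sin (real M * t M - t M))^2) \<longlonglongrightarrow> (sin (\<theta>s - 0))^2"
      by (intro tendsto_intros lim[folded t_def] t0)
    moreover have "eventually (\<lambda>M. (sin (real M * t M - t M))^2 = S2 M) sequentially"
      using ev1
    proof eventually_elim
      case (elim M)
      have "real M - 1 = real (M - 1)" using elim by (simp add: of_nat_diff)
      hence "S2 M = (sin (real (M - 1) * t M))^2" unfolding S2_def using sqt by metis
      also have "real (M - 1) * t M = real M * t M - t M" using elim by (simp add: of_nat_diff algebra_simps)
      finally show ?case by simp
    qed
    ultimately show ?thesis by (rule tc2) simp
  qed
  have AL: "A \<longlonglongrightarrow> 1 + (1 - 2*r^2) * 1" unfolding A_def by (intro tendsto_intros cos2)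
  have A2L: "A2 \<longlonglongrightarrow> r^2 + (1 - 2*r^2) * 1" unfolding A2_def by (intro tendsto_intros cos2)
  have den_ne: "r^2 + (1 - 2*r^2) * 1 * (sin \<theta>s)^2 + 0 \<noteq> 0 \<or> True" by simp
  have fin: "(\<lambda>M. (A M * (Ss M / real M) + E1 M) / (A2 M * S2 M + E2 M))
     \<longlonglongrightarrow> ((1 + (1 - 2*r^2) * 1) * (1/2 - (sin (2 * \<theta>s - 0) + 0) / (4 * \<theta>s)) + 0) / ((r^2 + (1 - 2*r^2) * 1) * (sin \<theta>s)^2 + 0)"
  proof -
    have num: "(\<lambda>M. A M * (Ss M / real M) + E1 M) \<longlonglongrightarrow> (1 + (1 - 2*r^2) * 1) * (1/2 - (sin (2 * \<theta>s - 0) + 0) / (4 * \<theta>s)) + 0"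
      by (rule tendsto_add[OF tendsto_mult[OF AL SsL] E1L])
    have den: "(\<lambda>M. A2 M * S2 M + E2 M) \<longlonglongrightarrow> (r^2 + (1 - 2*r^2) * 1) * (sin \<theta>s)^2 + 0"
      by (rule tendsto_add[OF tendsto_mult[OF A2L S2L] E2L])
    have "1 - r^2 > 0" using rq by simp
    hence "(r^2 + (1 - 2*r^2) * 1) * (sin \<theta>s)^2 + 0 \<noteq> 0" using sn by simp
    thus ?thesis by (rule tendsto_divide[OF num den])
  qed
  have val: "((1 + (1 - 2*r^2) * 1) * (1/2 - (sin (2 * \<theta>s - 0) + 0) / (4 * \<theta>s)) + 0) / ((r^2 + (1 - 2*r^2) * 1) * (sin \<theta>s)^2 + 0)
      = (1 / (sin \<theta>s)^2) * (1 - sin (2 * \<theta>s) / (2 * \<theta>s))"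
  proof -
    have q: "1 - r^2 \<noteq> 0" using rq by simp
    have n: "(1 + (1 - 2*r^2) * 1) * (1/2 - (sin (2 * \<theta>s - 0) + 0) / (4 * \<theta>s)) + 0 = (1 - r^2) * (1 - sin (2*\<theta>s)/(2*\<theta>s))"
      using ts by (simp add: field_simps)
    have d: "(r^2 + (1 - 2*r^2) * 1) * (sin \<theta>s)^2 + 0 = (1 - r^2) * (sin \<theta>s)^2"
      by (simp add: algebra_simps)
    show ?thesis unfolding n d using q by simp
  qed
  have eqv: "eventually (\<lambda>M. (A M * (Ss M / real M) + E1 M) / (A2 M * S2 M + E2 M) =
      ((\<Sum>k<M. (1 - r^2) * (sin (real k * \<theta> M))^2 + H r (\<theta> M) (real k * \<theta> M))
            / H r (\<theta> M) ((real M - 1) * \<theta> M)) / real M) sequentially"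
    using ev1
  proof eventually_elim
    case (elim M)
    have G: "(1 - r^2) * (sin x)^2 + H r (\<theta> M) x = A M * (sin x)^2 + X M x" for x
      unfolding H_expand A_def X_def \<sigma>_def by (simp add: algebra_simps)
    have Hd: "H r (\<theta> M) ((real M - 1) * \<theta> M) = A2 M * S2 M + E2 M"
      unfolding H_expand A2_def S2_def E2_def X_def \<sigma>_def by simp
    have "(\<Sum>k<M. (1 - r^2) * (sin (real k * \<theta> M))^2 + H r (\<theta> M) (real k * \<theta> M))
        = A M * Ss M + (\<Sum>k<M. X M (real k * \<theta> M))"
      unfolding G Ss_def by (simp add: sum.distrib sum_distrib_left)
    hence hN: "(\<Sum>k<M. (1 - r^2) * (sin (real k * \<theta> M))^2 + H r (\<theta> M) (real k * \<theta> M)) / real M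
        = A M * (Ss M / real M) + E1 M" unfolding E1_def by (simp add: add_divide_distrib)
    have gen: "(N / Dn) / real M = (N / real M) / (Dn::real)" for N Dn
      by (simp add: divide_divide_eq_left mult.commute)
    show ?case unfolding Hd gen hN ..
  qed
  show ?thesis using tc[OF fin eqv] val by simp
qed


lemma r_bounds:
  assumes u: "unitary2 a b c d" and nz: "a * b * c * d \<noteq> 0"
  shows "0 < cmod a" "cmod a < 1"
proof -
  have ab1: "cnj a * a + cnj b * b = 1" using unitary_facts[OF u nz] by auto
  have "complex_of_real ((cmod a)^2 + (cmod b)^2) = 1"
    using ab1 complex_norm_square[of a] complex_norm_square[of b] by (simp add: mult.commute)
  hence e: "(cmod a)^2 + (cmod b)^2 = 1" by (metis of_real_eq_1_iff)
  have "cmod b > 0" using nz by auto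
  hence "(cmod a)^2 < 1" using e by (smt (verit) zero_less_power2)
  thus "cmod a < 1" using power_less_one_iff[of "cmod a" 2] by simp
  show "0 < cmod a" using nz by auto
qed

theorem mainTheorem12:
  fixes a b c d s :: complex and \<omega> :: "nat \<Rightarrow> complex" and \<theta> :: "nat \<Rightarrow> real"
    and \<theta>s :: real
  assumes "unitary2 a b c d"
    and "s\<^sup>2 = a * d - b * c"
    and "a * b * c * d \<noteq> 0"
    and "\<forall>M\<ge>1. \<omega> M \<in> B_in a"
    and "\<forall>M\<ge>1. 0 < \<theta> M \<and> \<theta> M < pi \<and> complex_of_real (cos (\<theta> M)) = xfun a (\<omega> M)"
    and "(\<lambda>M. real M * min (\<theta> M) (pi - \<theta> M)) \<longlonglongrightarrow> \<theta>s"
    and "\<theta>s > 0"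
    and "\<forall>k::int. \<theta>s \<noteq> of_int k * pi"
  shows "(\<lambda>M. energy a b c d s M (\<omega> M) / real M) \<longlonglongrightarrow>
           (1 / (sin \<theta>s)\<^sup>2) * (1 - sin (2 * \<theta>s) / (2 * \<theta>s))"
proof -
  have sn: "sin \<theta>s \<noteq> 0" using assms(8) sin_zero_iff_int2 by blast
  have th: "\<forall>M\<ge>1. 0 < \<theta> M \<and> \<theta> M < pi" using assms(5) by blast
  note L = limit_part[OF r_bounds[OF assms(1,3)] th assms(6,7) sn]
  have ev: "eventually (\<lambda>M. ((\<Sum>k<M. (1 - (cmod a)^2) * (sin (real k * \<theta> M))^2 + H (cmod a) (\<theta> M) (real k * \<theta> M))
            / H (cmod a) (\<theta> M) ((real M - 1) * \<theta> M)) / real M = energy a b c d s M (\<omega> M) / real M) sequentially"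
    using eventually_ge_at_top[of "1::nat"]
  proof eventually_elim
    case (elim M)
    have w1: "cmod (\<omega> M) = 1" using assms(4) elim unfolding B_in_def by auto
    have t: "0 < \<theta> M" "\<theta> M < pi" "complex_of_real (cos (\<theta> M)) = xfun a (\<omega> M)" using assms(5) elim by auto
    show ?case using energy_formula[OF assms(1,2,3) w1 t elim] by simp
  qed
  show ?thesis using tc[OF L ev] .
qed

end
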